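(* Let \(A\) be a geometrically fast set of positive bumps with a fixed marking witnessing this. If \(s\neq t\) are points of \(I\) both having trivial history, then the orbits \(s\langle A\rangle\) and \(t\langle A\rangle\) are disjoint.
   Context: \(I=[0,1]\); homeomorphisms act on the right. A positive bump is an element of \(\operatorname{Homeo}_+(I)\) whose support \(\{t:ta\neq t\}\) is a single open interval \((x,y)\) on which \(ta>t\); \(x\), \(y\) are its left and right transition points. \(A\) is geometrically proper if no point is a left transition point of two distinct elements, nor a right transition point of two distinct elements. A marking assigns each \(a\in A\) a marker \(t\in\operatorname{supt}(a)\); for \(a\) with support \((x,y)\), \(\operatorname{src}(a)=(x,t)\), \(\operatorname{dest}(a)=[ta,y)\), \(\operatorname{dest}(a^{-1})=\operatorname{src}(a)\). \(A\) is geometrically fast if geometrically proper and the marking makes all these intervals pairwise disjoint. A point \(t\in I\) has trivial history if \(t\notin\operatorname{dest}(a)\) for every \(a\in A\cup A^{-1}\). \(s\langle A\rangle=\{sg: g\in\langle A\rangle\}\). *)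

theory Defs
  imports Complex_Main
begin

text \<open>Elements of Homeo_+(I), I = [0,1], are represented by functions real => real;
only their values on I matter. Action is on the right: t.a is written a t,
so t.(g h) = h (g t).\<close>

definition unitI :: "real set" where "unitI = {0..1}"

definition homeo_plus :: "(real \<Rightarrow> real) \<Rightarrow> bool" where
  "homeo_plus f \<longleftrightarrow> bij_betw f unitI unitI \<and> continuous_on unitI f \<and> strict_mono_on unitI f"

definition supt :: "(real \<Rightarrow> real) \<Rightarrow> real set" where
  "supt a = {t \<in> unitI. a t \<noteq> t}"

definition positive_bump :: "(real \<Rightarrow> real) \<Rightarrow> bool" where
  "positive_bump a \<longleftrightarrow> homeo_plus a \<and>
     (\<exists>x y. x < y \<and> supt a = {x<..<y} \<and> (\<forall>t\<in>{x<..<y}. a t > t))"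

definition left_tp :: "(real \<Rightarrow> real) \<Rightarrow> real" where "left_tp a = Inf (supt a)"
definition right_tp :: "(real \<Rightarrow> real) \<Rightarrow> real" where "right_tp a = Sup (supt a)"

definition geom_proper :: "(real \<Rightarrow> real) set \<Rightarrow> bool" where
  "geom_proper A \<longleftrightarrow> (\<forall>a\<in>A. \<forall>b\<in>A. a \<noteq> b \<longrightarrow> left_tp a \<noteq> left_tp b \<and> right_tp a \<noteq> right_tp b)"

definition marking :: "(real \<Rightarrow> real) set \<Rightarrow> ((real \<Rightarrow> real) \<Rightarrow> real) \<Rightarrow> bool" where
  "marking A m \<longleftrightarrow> (\<forall>a\<in>A. m a \<in> supt a)"

definition src :: "((real \<Rightarrow> real) \<Rightarrow> real) \<Rightarrow> (real \<Rightarrow> real) \<Rightarrow> real set" where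
  "src m a = {left_tp a<..<m a}"

definition dest :: "((real \<Rightarrow> real) \<Rightarrow> real) \<Rightarrow> (real \<Rightarrow> real) \<Rightarrow> real set" where
  "dest m a = {a (m a)..<right_tp a}"

text \<open>dest(a^-1) = src(a), so the family of all intervals is {src a, dest a | a in A}.\<close>
definition geom_fast :: "(real \<Rightarrow> real) set \<Rightarrow> ((real \<Rightarrow> real) \<Rightarrow> real) \<Rightarrow> bool" where
  "geom_fast A m \<longleftrightarrow> geom_proper A \<and> marking A m \<and>
     (\<forall>a\<in>A. \<forall>b\<in>A. src m a \<inter> dest m b = {} \<and>
        (a \<noteq> b \<longrightarrow> src m a \<inter> src m b = {} \<and> dest m a \<inter> dest m b = {}))"

text \<open>Trivial history: t not in dest(a) for a in A \<union> A^-1; since dest(a^-1) = src(a),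
this says t is in no dest(a) and no src(a) for a in A.\<close>
definition trivial_history :: "(real \<Rightarrow> real) set \<Rightarrow> ((real \<Rightarrow> real) \<Rightarrow> real) \<Rightarrow> real \<Rightarrow> bool" where
  "trivial_history A m t \<longleftrightarrow> (\<forall>a\<in>A. t \<notin> dest m a \<and> t \<notin> src m a)"

inductive_set gen_group :: "(real \<Rightarrow> real) set \<Rightarrow> (real \<Rightarrow> real) set" for A where
  gen_id: "id \<in> gen_group A"
| gen_mul: "g \<in> gen_group A \<Longrightarrow> a \<in> A \<Longrightarrow> a \<circ> g \<in> gen_group A"
| gen_mul_inv: "g \<in> gen_group A \<Longrightarrow> a \<in> A \<Longrightarrow> the_inv_into unitI a \<circ> g \<in> gen_group A"

definition orbit :: "(real \<Rightarrow> real) set \<Rightarrow> real \<Rightarrow> real set" where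
  "orbit A s = {g s | g. g \<in> gen_group A}"

end

theory Submission
  imports Defs
begin

definition act :: "(real \<Rightarrow> real) \<Rightarrow> bool \<Rightarrow> real \<Rightarrow> real" where
  "act a b = (if b then a else the_inv_into unitI a)"

definition dl :: "((real \<Rightarrow> real) \<Rightarrow> real) \<Rightarrow> (real \<Rightarrow> real) \<Rightarrow> bool \<Rightarrow> real set" where
  "dl m a b = (if b then dest m a else src m a)"

inductive_set reach :: "(real \<Rightarrow> real) set \<Rightarrow> ((real \<Rightarrow> real) \<Rightarrow> real) \<Rightarrow> real \<Rightarrow> real set"
  for A m s where
  r_base: "s \<in> reach A m s"
| r_step: "x \<in> reach A m s \<Longrightarrow> a \<in> A \<Longrightarrow> act a b x \<in> dl m a b \<Longrightarrow> act a b x \<in> reach A m s"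

lemma bump_facts:
  assumes "positive_bump a"
  shows "bij_betw a unitI unitI" "strict_mono_on unitI a" "left_tp a < right_tp a"
    "supt a = {left_tp a<..<right_tp a}" "\<And>t. t \<in> supt a \<Longrightarrow> a t > t"
    "0 \<le> left_tp a" "right_tp a \<le> 1"
proof -
  from assms show "bij_betw a unitI unitI" "strict_mono_on unitI a"
    unfolding positive_bump_def homeo_plus_def by auto
  from assms obtain x y where xy: "x < y" "supt a = {x<..<y}" "\<forall>t\<in>{x<..<y}. a t > t"
    unfolding positive_bump_def by auto
  have l: "left_tp a = x" and r: "right_tp a = y" using xy by (auto simp: left_tp_def right_tp_def)
  show "left_tp a < right_tp a" "supt a = {left_tp a<..<right_tp a}" "\<And>t. t \<in> supt a \<Longrightarrow> a t > t"
    using xy l r by auto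
  have sub: "{x<..<y} \<subseteq> unitI" using xy(2) unfolding supt_def by auto
  show "0 \<le> left_tp a"
  proof (rule ccontr)
    assume "\<not> 0 \<le> left_tp a"
    hence "x < 0" using l by simp
    hence "(x + min y 0)/2 \<in> {x<..<y}" using xy(1) by (auto simp: min_def)
    hence "(x + min y 0)/2 \<in> {0..1}" using sub unfolding unitI_def by blast
    moreover have "(x + min y 0)/2 < 0" using \<open>x<0\<close> by (simp add: min_def)
    ultimately show False by simp
  qed
  show "right_tp a \<le> 1"
  proof (rule ccontr)
    assume "\<not> right_tp a \<le> 1"
    hence "y > 1" using r by simp
    hence "(y + max x 1)/2 \<in> {x<..<y}" using xy(1) by (auto simp: max_def)
    hence "(y + max x 1)/2 \<in> {0..1}" using sub unfolding unitI_def by blast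
    moreover have "(y + max x 1)/2 > 1" using \<open>y>1\<close> by (simp add: max_def)
    ultimately show False by simp
  qed
qed

locale fastctx =
  fixes A :: "(real \<Rightarrow> real) set" and m
  assumes bumps: "\<forall>a\<in>A. positive_bump a" and fast: "geom_fast A m"
begin

lemma inj: "a \<in> A \<Longrightarrow> inj_on a unitI"
  using bump_facts(1) bumps bij_betw_def by blast

lemma img: "a \<in> A \<Longrightarrow> a ` unitI = unitI"
  using bump_facts(1) bumps bij_betw_def by blast

lemma act_in: "a \<in> A \<Longrightarrow> x \<in> unitI \<Longrightarrow> act a b x \<in> unitI"
  unfolding act_def using inj img
  by (auto intro: the_inv_into_into)

lemma act_inv: "a \<in> A \<Longrightarrow> z \<in> unitI \<Longrightarrow> act a (\<not> b) (act a b z) = z"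
  unfolding act_def using inj img
  by (auto simp: the_inv_into_f_f f_the_inv_into_f)

lemma uniq:
  assumes "a \<in> A" "a' \<in> A" "x \<in> dl m a b" "x \<in> dl m a' b'"
  shows "a = a' \<and> b = b'"
  using assms fast unfolding geom_fast_def dl_def
  by (cases b; cases b'; auto; blast)

lemma reach_unit0: "x \<in> reach A m s \<Longrightarrow> s \<in> unitI \<Longrightarrow> x \<in> unitI"
  by (induction rule: reach.induct) (auto intro: act_in)

lemma reach_unit: "s \<in> unitI \<Longrightarrow> x \<in> reach A m s \<Longrightarrow> x \<in> unitI"
  using reach_unit0 by blast

lemma reach_cases:
  assumes "x \<in> reach A m s"
  shows "x = s \<or> (\<exists>z a b. z \<in> reach A m s \<and> a \<in> A \<and> x = act a b z \<and> x \<in> dl m a b)"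
  using assms by (cases rule: reach.cases) auto

lemma th_not: "trivial_history A m s \<Longrightarrow> a \<in> A \<Longrightarrow> s \<notin> dl m a b"
  unfolding trivial_history_def dl_def by auto

lemma closure:
  assumes s: "s \<in> unitI" "trivial_history A m s"
    and x: "x \<in> reach A m s" and a: "a \<in> A"
  shows "act a b x \<in> reach A m s"
proof -
  have xu: "x \<in> unitI" using reach_unit s x by blast
  have pb: "positive_bump a" using bumps a by auto
  note bf = bump_facts[OF pb]
  have mk: "m a \<in> supt a" using fast a unfolding geom_fast_def marking_def by auto
  have ry: "right_tp a \<in> unitI" "right_tp a \<notin> supt a" using bf unfolding unitI_def by auto
  hence ay: "a (right_tp a) = right_tp a" unfolding supt_def by auto
  have su: "supt a \<subseteq> unitI" unfolding supt_def by auto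
  have bk: "act a b x \<in> reach A m s" if h: "x \<in> dl m a (\<not> b)"
  proof -
    have "x \<noteq> s" using th_not[OF s(2) a] h by auto
    then obtain z a' b' where z: "z \<in> reach A m s" "a' \<in> A" "x = act a' b' z" "x \<in> dl m a' b'"
      using reach_cases[OF x] by blast
    have "a' = a \<and> b' = (\<not> b)" using uniq[OF z(2) a z(4) h] .
    moreover have "z \<in> unitI" using reach_unit s z(1) by blast
    ultimately have "act a b x = z" using z(3) act_inv[OF a, of z "\<not> b"] by simp
    thus ?thesis using z(1) by simp
  qed
  show ?thesis
  proof (cases "x \<in> supt a")
    case False
    hence ax: "a x = x" using xu unfolding supt_def by auto
    have "act a b x = x"
    proof (cases b)
      case True thus ?thesis using ax by (simp add: act_def)
    next
      case False
      have "the_inv_into unitI a (a x) = x" using the_inv_into_f_f[OF inj[OF a] xu] .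
      thus ?thesis using ax False by (simp add: act_def)
    qed
    thus ?thesis using x by simp
  next
    case True
    show ?thesis
    proof (cases b)
      case b: True
      show ?thesis
      proof (cases "m a \<le> x")
        case True
        have "a (m a) \<le> a x" using True bf(2) mk su xu
          by (metis order_le_less strict_mono_onD subsetD)
        moreover have "a x < right_tp a" using bf(2) xu ry \<open>x \<in> supt a\<close> bf(4) ay
          by (metis greaterThanLessThan_iff strict_mono_onD)
        ultimately have "act a b x \<in> dl m a b" using b by (simp add: act_def dl_def dest_def)
        thus ?thesis using r_step[OF x a] by simp
      next
        case False
        hence "x \<in> dl m a (\<not> b)" using b \<open>x \<in> supt a\<close> bf(4) by (simp add: dl_def src_def)
        thus ?thesis using bk by simp
      qed
    next
      case b: False
      define u where "u = the_inv_into unitI a x"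
      have uu: "u \<in> unitI" using act_in[OF a xu, of False] by (simp add: u_def act_def)
      have au: "a u = x" using f_the_inv_into_f[OF inj[OF a]] img[OF a] xu by (simp add: u_def)
      have us: "u \<in> supt a"
      proof (rule ccontr)
        assume "u \<notin> supt a"
        hence "a u = u" using uu unfolding supt_def by auto
        hence "a x = x" using au by simp
        thus False using \<open>x \<in> supt a\<close> unfolding supt_def by auto
      qed
      show ?thesis
      proof (cases "u < m a")
        case True
        hence "act a b x \<in> dl m a b" using b us bf(4) by (simp add: act_def dl_def src_def u_def)
        thus ?thesis using r_step[OF x a] by simp
      next
        case False
        have "a (m a) \<le> a u" using False bf(2) mk su uu
          by (metis not_less order_le_less strict_mono_onD subsetD)
        hence "x \<in> dl m a (\<not> b)" using b au \<open>x \<in> supt a\<close> bf(4) by (simp add: dl_def dest_def)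
        thus ?thesis using bk by simp
      qed
    qed
  qed
qed

lemma orbit_reach:
  assumes "s \<in> unitI" "trivial_history A m s" "g \<in> gen_group A"
  shows "g s \<in> reach A m s"
  using assms(3)
proof (induction rule: gen_group.induct)
  case gen_id thus ?case by (simp add: r_base)
next
  case (gen_mul g a)
  thus ?case using closure[OF assms(1,2) gen_mul.IH gen_mul.hyps(2), of True] by (simp add: act_def)
next
  case (gen_mul_inv g a)
  thus ?case using closure[OF assms(1,2) gen_mul_inv.IH gen_mul_inv.hyps(2), of False] by (simp add: act_def)
qed

lemma common:
  assumes s: "s \<in> unitI" "trivial_history A m s" and t: "t \<in> unitI" "trivial_history A m t"
    and x: "x \<in> reach A m s"
  shows "x \<in> reach A m t \<Longrightarrow> s = t"
  using x
proof (induction rule: reach.induct)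
  case r_base
  show ?case using reach_cases[OF r_base] th_not[OF s(2)] by blast
next
  case (r_step z a b)
  have "act a b z \<noteq> t" using th_not[OF t(2) r_step(2)] r_step(3) by auto
  then obtain z' a' b' where z': "z' \<in> reach A m t" "a' \<in> A" "act a b z = act a' b' z'"
    "act a b z \<in> dl m a' b'"
    using reach_cases[OF r_step(5)] by metis
  have e: "a' = a \<and> b' = b" using uniq[OF z'(2) r_step(2) z'(4) r_step(3)] .
  have "z \<in> unitI" using reach_unit s r_step(1) by blast
  moreover have "z' \<in> unitI" using reach_unit t z'(1) by blast
  moreover have "act a b z = act a b z'" using z'(3) e by simp
  ultimately have "z = z'" using act_inv[OF r_step(2), of z b] act_inv[OF r_step(2), of z' b]
    by metis
  thus ?case using r_step(4) z'(1) by simp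
qed

end

theorem lemma5p6:
  assumes "\<forall>a\<in>A. positive_bump a"
    and "geom_fast A m"
    and "s \<in> unitI" and "t \<in> unitI" and "s \<noteq> t"
    and "trivial_history A m s" and "trivial_history A m t"
  shows "orbit A s \<inter> orbit A t = {}"
proof -
  interpret fastctx A m using assms(1,2) by unfold_locales
  show ?thesis
  proof (rule ccontr)
    assume "orbit A s \<inter> orbit A t \<noteq> {}"
    then obtain g h where g: "g \<in> gen_group A" and h: "h \<in> gen_group A" and e: "g s = h t"
      unfolding orbit_def by auto
    have "g s \<in> reach A m s" using orbit_reach[OF assms(3,6) g] .
    moreover have "g s \<in> reach A m t" using orbit_reach[OF assms(4,7) h] e by simp
    ultimately have "s = t" using common[OF assms(3,6,4,7)] by blast
    thus False using assms(5) by simp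
  qed
qed

end
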